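(* Let $\mathbb{R}^m$ be endowed with an arbitrary norm $\|\cdot\|$ and let $\mathbb{R}^n$ be endowed with the $\ell_1$ norm $\|\cdot\|_1$. Then for every $A\in\mathbb{R}^{m\times n}$ with at least two different columns, \[ \mathrm{diam}(A) = \max_{u\in \mathrm{conv}(A),\; x\in \Delta_{n-1}\setminus Z(u)} \frac{2\|Ax - u\|}{\mathrm{dist}(x,Z(u))},\qquad \Phi(A) = \min_{u\in \mathrm{conv}(A),\; x\in \Delta_{n-1}\setminus Z(u)} \frac{2\|Ax - u\|}{\mathrm{dist}(x,Z(u))}. \]
   Context: $\Delta_{n-1}=\{x\in\mathbb{R}^n_+ : \sum_i x_i=1\}$. For $A\in\mathbb{R}^{m\times n}$, $A$ is also identified with the set of its columns $a_1,\dots,a_n$, and $\mathrm{conv}(A)=\{Ax: x\in\Delta_{n-1}\}$. For $u\in\mathrm{conv}(A)$, $Z(u)=\{z\in\Delta_{n-1}: Az=u\}$, and $\mathrm{dist}(x,Z(u))=\min_{z\in Z(u)}\|x-z\|_1$ (distance in the norm of $\mathbb{R}^n$). $\mathrm{diam}(A)=\sup_{u,v\in A}\|u-v\|$ (norm of $\mathbb{R}^m$). The facial distance is $\Phi(A)=\min\{\mathrm{dist}(F,\mathrm{conv}(A\setminus F)) : F \text{ a face of } \mathrm{conv}(A),\ \emptyset\neq F\neq \mathrm{conv}(A)\}$, where $A\setminus F$ is the set of columns of $A$ not in $F$ and $\mathrm{dist}(F,G)=\inf_{u\in F,w\in G}\|u-w\|$ in the norm of $\mathbb{R}^m$. *)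

theory Defs
  imports "HOL-Analysis.Analysis"
begin

definition is_norm :: "('a::real_vector \<Rightarrow> real) \<Rightarrow> bool" where
  "is_norm N \<longleftrightarrow> (\<forall>x. 0 \<le> N x) \<and> (\<forall>x. N x = 0 \<longleftrightarrow> x = 0)
     \<and> (\<forall>c x. N (c *\<^sub>R x) = \<bar>c\<bar> * N x) \<and> (\<forall>x y. N (x + y) \<le> N x + N y)"

definition std_simplex :: "(real^'n) set" where
  "std_simplex = {x. (\<forall>i. 0 \<le> x $ i) \<and> (\<Sum>i\<in>UNIV. x $ i) = 1}"

definition convA :: "real^'n^'m \<Rightarrow> (real^'m) set" where
  "convA A = {A *v x | x. x \<in> std_simplex}"

definition Zset :: "real^'n^'m \<Rightarrow> real^'m \<Rightarrow> (real^'n) set" where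
  "Zset A u = {z \<in> std_simplex. A *v z = u}"

definition norm1 :: "real^'n \<Rightarrow> real" where
  "norm1 x = (\<Sum>i\<in>UNIV. \<bar>x $ i\<bar>)"

definition dist1 :: "real^'n \<Rightarrow> (real^'n) set \<Rightarrow> real" where
  "dist1 x S = Inf {norm1 (x - z) | z. z \<in> S}"

definition diamA :: "(real^'m \<Rightarrow> real) \<Rightarrow> real^'n^'m \<Rightarrow> real" where
  "diamA N A = Sup {N (column i A - column j A) | i j. True}"

definition setdistN :: "(real^'m \<Rightarrow> real) \<Rightarrow> (real^'m) set \<Rightarrow> (real^'m) set \<Rightarrow> real" where
  "setdistN N F G = Inf {N (u - w) | u w. u \<in> F \<and> w \<in> G}"

definition facial_distance :: "(real^'m \<Rightarrow> real) \<Rightarrow> real^'n^'m \<Rightarrow> real" where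
  "facial_distance N A = Inf {setdistN N F (convex hull {column i A | i. column i A \<notin> F}) | F.
      F face_of convA A \<and> F \<noteq> {} \<and> F \<noteq> convA A}"

definition ratios :: "(real^'m \<Rightarrow> real) \<Rightarrow> real^'n^'m \<Rightarrow> real set" where
  "ratios N A = {2 * N (A *v x - u) / dist1 x (Zset A u) | u x.
      u \<in> convA A \<and> x \<in> std_simplex - Zset A u}"

end

theory Submission
  imports Defs
begin


lemma mult_sumR: "(A::real^'n^'m) *v x = (\<Sum>i\<in>UNIV. x$i *\<^sub>R column i A)"
  by (simp add: matrix_mult_sum scalar_mult_eq_scaleR)

lemma norm_props:
  assumes "is_norm N"
  shows "N (-x) = N x" "N (x - y) = N (y - x)" "N x \<ge> 0" "N (c *\<^sub>R x) = \<bar>c\<bar> * N x"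
    "N (x + y) \<le> N x + N y"
proof -
  have h: "N (c *\<^sub>R x) = \<bar>c\<bar> * N x" for c x using assms unfolding is_norm_def by blast
  show "N (-x) = N x" using h[of "-1" x] by simp
  show "N (x - y) = N (y - x)" using h[of "-1" "x - y"] by simp
  show "N x \<ge> 0" "N (c *\<^sub>R x) = \<bar>c\<bar> * N x" "N (x + y) \<le> N x + N y"
    using assms h unfolding is_norm_def by auto
qed

lemma norm_convex:
  assumes "is_norm N" shows "convex_on UNIV N"
proof (rule convex_onI)
  fix t :: real and x y assume t: "0 < t" "t < 1"
  have "N ((1 - t) *\<^sub>R x + t *\<^sub>R y) \<le> N ((1 - t) *\<^sub>R x) + N (t *\<^sub>R y)"
    using norm_props(5)[OF assms] .
  also have "\<dots> = (1 - t) * N x + t * N y" using norm_props(4)[OF assms] t by simp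
  finally show "N ((1 - t) *\<^sub>R x + t *\<^sub>R y) \<le> (1 - t) * N x + t * N y" .
qed simp

lemma norm_cont:
  fixes N :: "'a::euclidean_space \<Rightarrow> real"
  assumes "is_norm N" shows "continuous_on UNIV N"
  by (rule convex_on_continuous) (auto intro: norm_convex assms)

lemma convex_std_simplex: "convex (std_simplex :: (real^'n) set)"
  unfolding convex_def std_simplex_def
  by (auto simp: sum.distrib sum_distrib_left[symmetric] intro!: add_nonneg_nonneg)

lemma axis_simplex: "axis i 1 \<in> (std_simplex :: (real^'n) set)"
  unfolding std_simplex_def by (auto simp: axis_def)

lemma hull_sub:
  fixes A :: "real^'n^'m"
  shows "convex hull ((\<lambda>i. column i A) ` K) \<subseteq>
     {A *v x | x. x \<in> std_simplex \<and> (\<forall>i. i \<notin> K \<longrightarrow> x$i = 0)}"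
proof (rule hull_minimal)
  show "(\<lambda>i. column i A) ` K \<subseteq> {A *v x | x. x \<in> std_simplex \<and> (\<forall>i. i \<notin> K \<longrightarrow> x$i = 0)}"
  proof
    fix v assume "v \<in> (\<lambda>i. column i A) ` K"
    then obtain i where i: "i \<in> K" "v = column i A" by auto
    have "A *v axis i 1 = column i A"
    proof -
      have "(\<Sum>j\<in>UNIV. (axis i (1::real)) $ j *\<^sub>R column j A) = (\<Sum>j\<in>UNIV. if j = i then column j A else 0)"
        by (rule sum.cong) (auto simp: axis_def)
      then show ?thesis by (simp add: mult_sumR)
    qed
    then show "v \<in> {A *v x | x. x \<in> std_simplex \<and> (\<forall>i. i \<notin> K \<longrightarrow> x$i = 0)}"
      using i axis_simplex[of i] by (auto simp: axis_def intro!: exI[of _ "axis i 1"])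
  qed
  show "convex {A *v x | x. x \<in> std_simplex \<and> (\<forall>i. i \<notin> K \<longrightarrow> x$i = 0)}"
  proof (unfold convex_def, intro ballI allI impI)
    fix p q and u v :: real
    assume p: "p \<in> {A *v x | x. x \<in> std_simplex \<and> (\<forall>i. i \<notin> K \<longrightarrow> x$i = 0)}"
      and q: "q \<in> {A *v x | x. x \<in> std_simplex \<and> (\<forall>i. i \<notin> K \<longrightarrow> x$i = 0)}"
      and uv: "0 \<le> u" "0 \<le> v" "u + v = 1"
    obtain x1 where x1: "x1 \<in> std_simplex" "\<forall>i. i \<notin> K \<longrightarrow> x1$i = 0" "p = A *v x1" using p by auto
    obtain x2 where x2: "x2 \<in> std_simplex" "\<forall>i. i \<notin> K \<longrightarrow> x2$i = 0" "q = A *v x2" using q by auto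
    have "u *\<^sub>R x1 + v *\<^sub>R x2 \<in> std_simplex"
      using convex_std_simplex x1(1) x2(1) uv unfolding convex_def by blast
    moreover have "A *v (u *\<^sub>R x1 + v *\<^sub>R x2) = u *\<^sub>R p + v *\<^sub>R q"
      by (simp add: x1 x2 matrix_vector_right_distrib matrix_vector_mult_scaleR)
    ultimately show "u *\<^sub>R p + v *\<^sub>R q \<in> {A *v x | x. x \<in> std_simplex \<and> (\<forall>i. i \<notin> K \<longrightarrow> x$i = 0)}"
      using x1(2) x2(2) by (auto intro!: exI[of _ "u *\<^sub>R x1 + v *\<^sub>R x2"])
  qed
qed

lemma convA_hull:
  fixes A :: "real^'n^'m"
  shows "convA A = convex hull (range (\<lambda>i. column i A))"
proof
  show "convex hull range (\<lambda>i. column i A) \<subseteq> convA A"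
    using hull_sub[of A UNIV] unfolding convA_def by auto
  show "convA A \<subseteq> convex hull range (\<lambda>i. column i A)"
  proof
    fix v assume "v \<in> convA A"
    then obtain x where x: "x \<in> std_simplex" "v = A *v x" unfolding convA_def by auto
    show "v \<in> convex hull range (\<lambda>i. column i A)"
      unfolding x(2) mult_sumR
      by (rule convex_sum) (use x(1) in \<open>auto simp: std_simplex_def hull_inc\<close>)
  qed
qed

lemma convA_props:
  fixes A :: "real^'n^'m"
  shows "convex (convA A)" "compact (convA A)" "polytope (convA A)"
  unfolding convA_hull
  by (auto simp: polytope_def intro!: finite_imp_compact_convex_hull exI[of _ "range (\<lambda>i. column i A)"])

lemma col_in_convA: "column i A \<in> convA A"
  unfolding convA_hull by (simp add: hull_inc)



lemma simplex_one:
  assumes "z \<in> (std_simplex :: (real^'n) set)" "z$i = 1"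
  shows "z = axis i 1"
proof -
  have nn: "\<forall>j. 0 \<le> z$j" "(\<Sum>j\<in>UNIV. z$j) = 1" using assms(1) by (auto simp: std_simplex_def)
  have "(\<Sum>j\<in>UNIV. z$j) = z$i + (\<Sum>j\<in>UNIV-{i}. z$j)"
    by (simp add: sum.remove)
  then have "(\<Sum>j\<in>UNIV-{i}. z$j) = 0" using nn assms(2) by simp
  then have "\<forall>j\<in>UNIV-{i}. z$j = 0" using nn(1) by (simp add: sum_nonneg_eq_0_iff)
  then show ?thesis using assms(2) by (auto simp: vec_eq_iff axis_def)
qed

lemma A_axis: "(A::real^'n^'m) *v axis i 1 = column i A"
proof -
  have "(\<Sum>j\<in>UNIV. (axis i (1::real)) $ j *\<^sub>R column j A) = (\<Sum>j\<in>UNIV. if j = i then column j A else 0)"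
    by (rule sum.cong) (auto simp: axis_def)
  then show ?thesis by (simp add: mult_sumR)
qed

lemma face_support:
  fixes A :: "real^'n^'m"
  assumes F: "F face_of convA A" and z: "z \<in> std_simplex" and Az: "A *v z \<in> F" and zi: "z$i > 0"
  shows "column i A \<in> F"
proof (cases "z$i = 1")
  case True
  then show ?thesis using simplex_one[OF z True] Az A_axis by metis
next
  case False
  define t where "t = z$i"
  have t: "0 < t" "t < 1"
  proof -
    have nn: "\<forall>j. 0 \<le> z$j" "(\<Sum>j\<in>UNIV. z$j) = 1" using z by (auto simp: std_simplex_def)
    have "z$i \<le> (\<Sum>j\<in>UNIV. z$j)" using nn(1) by (intro member_le_sum) auto
    then show "0 < t" "t < 1" using zi False nn(2) by (auto simp: t_def)
  qed
  define v where "v = (1/(1-t)) *\<^sub>R (z - t *\<^sub>R axis i 1)"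
  have v: "v \<in> std_simplex"
  proof -
    have nn: "\<forall>j. 0 \<le> z$j" "(\<Sum>j\<in>UNIV. z$j) = 1" using z by (auto simp: std_simplex_def)
    have "\<forall>j. 0 \<le> v$j" using nn t by (auto simp: v_def axis_def t_def)
    moreover have "(\<Sum>j\<in>UNIV. v$j) = 1"
    proof -
      have "(\<Sum>j\<in>UNIV. v$j) = (1/(1-t)) * ((\<Sum>j\<in>UNIV. z$j) - t * (\<Sum>j\<in>UNIV. axis i 1 $ j))"
        by (simp add: v_def sum_divide_distrib[symmetric] sum_subtractf sum_distrib_left)
      also have "(\<Sum>j\<in>UNIV. axis i (1::real) $ j) = 1"
        by (simp add: axis_def)
      finally show ?thesis using nn t by simp
    qed
    ultimately show ?thesis by (simp add: std_simplex_def)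
  qed
  have zeq: "z = (1 - t) *\<^sub>R v + t *\<^sub>R axis i 1" using t by (simp add: v_def)
  have Azeq: "A *v z = (1 - t) *\<^sub>R (A *v v) + t *\<^sub>R column i A"
    by (simp add: zeq matrix_vector_right_distrib matrix_vector_mult_scaleR A_axis)
  have Av: "A *v v \<in> convA A" using v by (auto simp: convA_def)
  show ?thesis
  proof (cases "A *v v = column i A")
    case True then show ?thesis using Az Azeq by (metis scaleR_collapse)
  next
    case False
    then have "A *v z \<in> open_segment (A *v v) (column i A)"
      using t Azeq by (auto simp: in_segment)
    then show ?thesis using F Az Av col_in_convA unfolding face_of_def by blast
  qed
qed

lemma norm1_triangle: "norm1 (x + y) \<le> norm1 x + norm1 y"
  unfolding norm1_def by (simp add: sum.distrib[symmetric] sum_mono abs_triangle_ineq)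

lemma norm1_diff: "norm1 (x - y) \<le> norm1 x + norm1 y"
proof -
  have "norm1 (-y) = norm1 y" by (simp add: norm1_def)
  then show ?thesis using norm1_triangle[of x "-y"] by simp
qed

lemma norm1_scale: "norm1 (c *\<^sub>R x) = \<bar>c\<bar> * norm1 x"
  unfolding norm1_def by (simp add: abs_mult sum_distrib_left)

lemma norm1_simplex: "x \<in> std_simplex \<Longrightarrow> norm1 x = 1"
  unfolding norm1_def std_simplex_def by simp

lemma norm1_cont: "continuous_on UNIV (norm1 :: real^'n \<Rightarrow> real)"
  unfolding norm1_def by (intro continuous_intros)

lemma simplex_compact: "compact (std_simplex :: (real^'n) set)"
proof (unfold compact_eq_bounded_closed, rule conjI)
  show "bounded (std_simplex :: (real^'n) set)"
    unfolding bounded_iff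
    by (rule exI[of _ 1]) (metis norm1_simplex norm1_def norm_le_l1_cart)
  have "std_simplex = (\<Inter>i. {x::real^'n. 0 \<le> x$i}) \<inter> {x. (\<Sum>i\<in>UNIV. x $ i) = 1}"
    unfolding std_simplex_def by auto
  also have "closed \<dots>"
    by (intro closed_Int closed_INT ballI closed_Collect_le closed_Collect_eq continuous_intros)
  finally show "closed (std_simplex :: (real^'n) set)" .
qed

lemma Zset_compact: "compact (Zset (A::real^'n^'m) u)"
proof -
  have "Zset A u = std_simplex \<inter> {z. A *v z = u}" by (auto simp: Zset_def)
  moreover have "closed {z. A *v z = u}"
    by (intro closed_Collect_eq continuous_intros)
  ultimately show ?thesis using simplex_compact by (metis compact_Int_closed)
qed

lemma dist_min:
  fixes A :: "real^'n^'m"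
  assumes u: "u \<in> convA A"
  shows "\<exists>z\<in>Zset A u. dist1 x (Zset A u) = norm1 (x - z) \<and> (\<forall>z'\<in>Zset A u. norm1 (x - z) \<le> norm1 (x - z'))"
proof -
  have ne: "Zset A u \<noteq> {}" using u by (auto simp: convA_def Zset_def)
  have "continuous_on (Zset A u) (\<lambda>z. norm1 (x - z))"
    by (rule continuous_on_compose2[OF norm1_cont]) (auto intro: continuous_intros)
  then obtain z where z: "z \<in> Zset A u" "\<forall>z'\<in>Zset A u. norm1 (x - z) \<le> norm1 (x - z')"
    using continuous_attains_inf[OF Zset_compact ne] by blast
  have "dist1 x (Zset A u) = norm1 (x - z)"
    unfolding dist1_def by (rule cInf_eq_minimum) (use z in auto)
  then show ?thesis using z by blast
qed

lemma dist_pos: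
  fixes A :: "real^'n^'m"
  assumes u: "u \<in> convA A" and x: "x \<notin> Zset A u"
  shows "dist1 x (Zset A u) > 0"
proof -
  obtain z where z: "z \<in> Zset A u" "dist1 x (Zset A u) = norm1 (x - z)" using dist_min[OF u] by blast
  have "x - z \<noteq> 0" using z x by auto
  then obtain i where "(x - z)$i \<noteq> 0" by (auto simp: vec_eq_iff)
  then have "0 < \<bar>(x - z)$i\<bar>" by simp
  also have "\<dots> \<le> norm1 (x - z)" unfolding norm1_def by (rule member_le_sum) auto
  finally show ?thesis using z by simp
qed



lemma min_face:
  fixes A :: "real^'n^'m"
  assumes q: "q \<in> convA A"
  shows "\<exists>F. F face_of convA A \<and> q \<in> rel_interior F"
proof -
  define F where "F = \<Inter>{G. G face_of convA A \<and> q \<in> G}"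
  have F: "F face_of convA A" unfolding F_def
    by (rule face_of_Inter) (use q convA_props(1)[of A] face_of_refl in auto)
  have qF: "q \<in> F" unfolding F_def by auto
  have cF: "convex F" using F face_of_imp_convex by blast
  have "q \<in> rel_interior F"
  proof (rule ccontr)
    assume nq: "q \<notin> rel_interior F"
    obtain a where a: "a \<noteq> 0" "\<And>y. y \<in> F \<Longrightarrow> a \<bullet> q \<le> a \<bullet> y"
        "\<And>y. y \<in> rel_interior F \<Longrightarrow> a \<bullet> q < a \<bullet> y"
      using supporting_hyperplane_rel_boundary[OF cF qF nq] by blast
    define H where "H = F \<inter> {y. a \<bullet> y = a \<bullet> q}"
    have "H face_of F" unfolding H_def
      by (rule face_of_Int_supporting_hyperplane_ge) (use cF a in auto)
    then have "H face_of convA A" using F face_of_trans by blast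
    moreover have "q \<in> H" using qF by (simp add: H_def)
    ultimately have "F \<subseteq> H" unfolding F_def by blast
    moreover have "rel_interior F \<noteq> {}" using cF qF rel_interior_eq_empty by blast
    then obtain y where y: "y \<in> rel_interior F" by blast
    ultimately have "y \<in> H" using rel_interior_subset by blast
    then show False using a(3)[OF y] by (simp add: H_def)
  qed
  then show ?thesis using F by blast
qed

lemma diam_props:
  fixes A :: "real^'n^'m"
  assumes "is_norm N"
  shows "\<forall>i j. N (column i A - column j A) \<le> diamA N A"
    "\<exists>i j. diamA N A = N (column i A - column j A)"
proof -
  define D where "D = {N (column i A - column j A) | i j. True}"
  have D: "D = (\<lambda>(i,j). N (column i A - column j A)) ` UNIV" unfolding D_def by auto
  have fin: "finite D" unfolding D by simp
  have ne: "D \<noteq> {}" unfolding D by simp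
  have eq: "diamA N A = Max D" unfolding diamA_def D_def[symmetric] using cSup_eq_Max[OF fin ne] .
  show "\<forall>i j. N (column i A - column j A) \<le> diamA N A"
    unfolding eq using fin by (auto intro!: Max_ge simp: D_def)
  show "\<exists>i j. diamA N A = N (column i A - column j A)"
    using Max_in[OF fin ne] unfolding eq by (auto simp: D_def)
qed

lemma convex_on_shift:
  assumes "is_norm N" and that: "convex S"
  shows "convex_on S (\<lambda>v. N (a - v))" "convex_on S (\<lambda>v. N (v - a))"
proof -
  have c: "convex_on UNIV N" by (rule norm_convex[OF assms(1)])
  show "convex_on S (\<lambda>v. N (a - v))"
  proof (rule convex_onI[OF _ that])
    fix t :: real and x y assume t: "0 < t" "t < 1"
    have "a - ((1 - t) *\<^sub>R x + t *\<^sub>R y) = (1 - t) *\<^sub>R (a - x) + t *\<^sub>R (a - y)"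
      by (simp add: algebra_simps)
    then show "N (a - ((1 - t) *\<^sub>R x + t *\<^sub>R y)) \<le> (1 - t) * N (a - x) + t * N (a - y)"
      using convex_onD[OF c, of t "a - x" "a - y"] t by simp
  qed
  show "convex_on S (\<lambda>v. N (v - a))"
  proof (rule convex_onI[OF _ that])
    fix t :: real and x y assume t: "0 < t" "t < 1"
    have "((1 - t) *\<^sub>R x + t *\<^sub>R y) - a = (1 - t) *\<^sub>R (x - a) + t *\<^sub>R (y - a)"
      by (simp add: algebra_simps)
    then show "N (((1 - t) *\<^sub>R x + t *\<^sub>R y) - a) \<le> (1 - t) * N (x - a) + t * N (y - a)"
      using convex_onD[OF c, of t "x - a" "y - a"] t by simp
  qed
qed

lemma conv_diam:
  fixes A :: "real^'n^'m"
  assumes N: "is_norm N" and p: "p \<in> convA A" and q: "q \<in> convA A"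
  shows "N (p - q) \<le> diamA N A"
proof -
  have 1: "N (column i A - q) \<le> diamA N A" if q: "q \<in> convA A" for i q
  proof -
    have "\<forall>q\<in>convex hull (range (\<lambda>j. column j A)). N (column i A - q) \<le> diamA N A"
      by (rule convex_on_convex_hull_bound) (simp_all add: convex_on_shift(1)[OF N convex_convex_hull] diam_props(1)[OF N])
    then show ?thesis using q convA_hull by blast
  qed
  have "\<forall>p\<in>convex hull (range (\<lambda>j. column j A)). N (p - q) \<le> diamA N A"
    by (rule convex_on_convex_hull_bound) (use convex_on_shift(2)[OF N convex_convex_hull] 1[OF q] in auto)
  then show ?thesis using p convA_hull by blast
qed



lemma norm1_sub_axis:
  fixes dp :: "real^'n"
  assumes "\<forall>j. 0 \<le> dp$j" "0 \<le> c" "c \<le> dp$i"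
  shows "norm1 (dp - c *\<^sub>R axis i 1) = (\<Sum>j\<in>UNIV. dp$j) - c"
proof -
  have "norm1 (dp - c *\<^sub>R axis i 1) = (\<Sum>j\<in>UNIV. dp$j - c * (axis i 1 :: real^'n)$j)"
    unfolding norm1_def by (rule sum.cong) (use assms in \<open>auto simp: axis_def\<close>)
  also have "\<dots> = (\<Sum>j\<in>UNIV. dp$j) - c * (\<Sum>j\<in>UNIV. (axis i 1 :: real^'n)$j)"
    by (simp add: sum_subtractf sum_distrib_left)
  also have "(\<Sum>j\<in>UNIV. (axis i 1 :: real^'n)$j) = 1" by (simp add: axis_def)
  finally show ?thesis by simp
qed

lemma key_claim:
  fixes A :: "real^'n^'m" and z x dp dn v :: "real^'n"
  assumes z: "z \<in> Zset A u" and zmin: "\<forall>z'\<in>Zset A u. norm1 (x - z) \<le> norm1 (x - z')"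
    and x: "x \<in> std_simplex"
    and dpdef: "dp = (\<chi> j. max ((x - z)$j) 0)" and dndef: "dn = (\<chi> j. max (- (x - z)$j) 0)"
    and lam: "(\<Sum>j\<in>UNIV. dp$j) = l" "(\<Sum>j\<in>UNIV. dn$j) = l" "l > 0" "norm1 (x - z) = 2 * l"
    and q: "A *v dn = l *\<^sub>R q"
    and F: "F face_of convA A" and qF: "q \<in> rel_interior F"
    and di: "(x - z)$i > 0"
  shows "column i A \<notin> F"
proof
  assume ciF: "column i A \<in> F"
  have cF: "convex F" using F face_of_imp_convex by blast
  have Fne: "F \<noteq> {}" using ciF by blast
  obtain e where e: "e > 1" "(1 - e) *\<^sub>R column i A + e *\<^sub>R q \<in> F"
    using convex_rel_interior_iff[OF cF Fne] qF ciF by blast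
  define w where "w = (1 - e) *\<^sub>R column i A + e *\<^sub>R q"
  have "w \<in> convA A" using e(2) F face_of_imp_subset unfolding w_def by blast
  then obtain v where v: "v \<in> std_simplex" "A *v v = w" unfolding convA_def by auto
  define t where "t = 1 - 1/e"
  have t: "0 < t" "t < 1" using e(1) by (auto simp: t_def field_simps)
  define d where "d = x - z"
  define c where "c = (x - z)$i"
  define \<epsilon> where "\<epsilon> = c / (c + l)"
  have c: "c > 0" using di by (simp add: c_def)
  have eps: "0 < \<epsilon>" "\<epsilon> \<le> 1" using c lam(3) by (auto simp: \<epsilon>_def field_simps)
  have elt: "\<epsilon> * l * t \<le> c"
  proof -
    have "\<epsilon> * l * t \<le> \<epsilon> * l" using eps lam(3) t by (simp add: mult_left_le)
    also have "\<epsilon> * l = c * (l / (c + l))" by (simp add: \<epsilon>_def)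
    also have "\<dots> \<le> c * 1" using c lam(3) by (intro mult_left_mono) auto
    finally show ?thesis by simp
  qed
  have eltpos: "\<epsilon> * l * t > 0" using eps lam(3) t by simp
  define z' where "z' = z - \<epsilon> *\<^sub>R dn + (\<epsilon> * l * t) *\<^sub>R axis i 1 + (\<epsilon> * l * (1 - t)) *\<^sub>R v"
  have zs: "z \<in> std_simplex" "A *v z = u" using z by (auto simp: Zset_def)
  have z'nn: "0 \<le> z'$j" for j
  proof -
    have zj: "0 \<le> z$j" "0 \<le> x$j" using zs x by (auto simp: std_simplex_def)
    have "0 \<le> z$j - \<epsilon> * dn$j"
    proof (cases "(x - z)$j < 0")
      case True
      then have h1: "dn$j = z$j - x$j" by (simp add: dndef)
      have h2: "\<epsilon> * dn$j = \<epsilon> * z$j - \<epsilon> * x$j" by (simp add: h1 right_diff_distrib)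
      have h3: "(1 - \<epsilon>) * (x$j - z$j) \<le> 0" using eps True by (intro mult_nonneg_nonpos) auto
      have h4: "(1 - \<epsilon>) * (x$j - z$j) = x$j - z$j - \<epsilon> * x$j + \<epsilon> * z$j" by (simp add: algebra_simps)
      have "\<epsilon> * dn$j \<le> z$j - x$j" using h2 h3 h4 by linarith
      then show ?thesis using zj by simp
    next
      case False
      then have "dn$j = 0" by (simp add: dndef)
      then show ?thesis using zj by simp
    qed
    moreover have "0 \<le> (\<epsilon> * l * t) * (axis i 1 :: real^'n)$j" using eltpos by (simp add: axis_def)
    moreover have "0 \<le> (\<epsilon> * l * (1 - t)) * v$j" using v(1) eps lam(3) t
      by (intro mult_nonneg_nonneg) (auto simp: std_simplex_def)
    ultimately show ?thesis by (simp add: z'_def)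
  qed
  have z'sum: "(\<Sum>j\<in>UNIV. z'$j) = 1"
  proof -
    have "(\<Sum>j\<in>UNIV. z'$j) = (\<Sum>j\<in>UNIV. z$j) - \<epsilon> * (\<Sum>j\<in>UNIV. dn$j)
       + (\<epsilon> * l * t) * (\<Sum>j\<in>UNIV. (axis i 1 :: real^'n)$j) + (\<epsilon> * l * (1 - t)) * (\<Sum>j\<in>UNIV. v$j)"
      by (simp only: z'_def vector_add_component vector_minus_component vector_scaleR_component sum.distrib sum_subtractf sum_distrib_left real_scaleR_def)
    also have "\<dots> = 1 - \<epsilon> * l + \<epsilon> * l * t + \<epsilon> * l * (1 - t)"
      using zs v lam by (simp add: std_simplex_def axis_def)
    finally show ?thesis by (simp add: algebra_simps)
  qed
  have tq: "t *\<^sub>R column i A + (1 - t) *\<^sub>R w = q"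
  proof -
    have "(1 - t) *\<^sub>R w = ((1 - e) / e) *\<^sub>R column i A + q"
      using e(1) by (simp add: w_def t_def scaleR_add_right)
    moreover have "t + (1 - e) / e = 0" using e(1) by (simp add: t_def field_simps)
    ultimately show ?thesis by (simp add: add.assoc[symmetric] scaleR_left_distrib[symmetric])
  qed
  have Az': "A *v z' = u"
  proof -
    have "A *v z' = u - \<epsilon> *\<^sub>R (l *\<^sub>R q) + (\<epsilon> * l) *\<^sub>R (t *\<^sub>R column i A + (1 - t) *\<^sub>R w)"
      by (simp only: z'_def matrix_vector_right_distrib matrix_vector_mult_diff_distrib matrix_vector_mult_scaleR A_axis zs(2) q v(2) scaleR_add_right scaleR_scaleR add.assoc mult.assoc)
    then show ?thesis by (simp add: tq)
  qed
  have z'Z: "z' \<in> Zset A u" using z'nn z'sum Az' by (simp add: Zset_def std_simplex_def)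
  have ddec: "x - z = dp - dn" by (auto simp: vec_eq_iff dpdef dndef)
  have xz': "x - z' = (dp - (\<epsilon> * l * t) *\<^sub>R axis i 1) - ((1 - \<epsilon>) *\<^sub>R dn + (\<epsilon> * l * (1 - t)) *\<^sub>R v)"
  proof -
    have "x - z' = (x - z) + \<epsilon> *\<^sub>R dn - (\<epsilon> * l * t) *\<^sub>R axis i 1 - (\<epsilon> * l * (1 - t)) *\<^sub>R v"
      unfolding z'_def by (simp add: algebra_simps)
    then show ?thesis by (simp add: ddec algebra_simps)
  qed
  have dpnn: "\<forall>j. 0 \<le> dp$j" "\<forall>j. 0 \<le> dn$j" by (auto simp: dpdef dndef)
  have dpi: "dp$i = c" using c by (simp add: dpdef c_def)
  have n1: "norm1 (dp - (\<epsilon> * l * t) *\<^sub>R axis i 1) = l - \<epsilon> * l * t"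
    using norm1_sub_axis[of dp "\<epsilon> * l * t" i] dpnn eltpos elt dpi lam by simp
  have n2: "norm1 ((1 - \<epsilon>) *\<^sub>R dn) = (1 - \<epsilon>) * l"
  proof -
    have "norm1 dn = l" unfolding norm1_def using dpnn lam by simp
    then show ?thesis using eps by (simp add: norm1_scale)
  qed
  have n3: "norm1 ((\<epsilon> * l * (1 - t)) *\<^sub>R v) = \<epsilon> * l * (1 - t)"
    using eps lam t norm1_simplex[OF v(1)] by (simp add: norm1_scale)
  have "norm1 (x - z') \<le> norm1 (dp - (\<epsilon> * l * t) *\<^sub>R axis i 1) + norm1 ((1 - \<epsilon>) *\<^sub>R dn + (\<epsilon> * l * (1 - t)) *\<^sub>R v)"
    unfolding xz' by (rule norm1_diff)
  also have "\<dots> \<le> norm1 (dp - (\<epsilon> * l * t) *\<^sub>R axis i 1) + (norm1 ((1 - \<epsilon>) *\<^sub>R dn) + norm1 ((\<epsilon> * l * (1 - t)) *\<^sub>R v))"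
    using norm1_triangle by (rule add_left_mono)
  also have "\<dots> = (l - \<epsilon> * l * t) + ((1 - \<epsilon>) * l + \<epsilon> * l * (1 - t))"
    by (simp only: n1 n2 n3)
  also have "\<dots> = 2 * l - 2 * (\<epsilon> * l * t)" by (simp add: algebra_simps)
  finally have lt: "norm1 (x - z') < 2 * l" using eltpos by linarith
  have "norm1 (x - z) \<le> norm1 (x - z')" using zmin z'Z by blast
  then show False using lt lam(4) by linarith
qed



lemma key:
  fixes A :: "real^'n^'m"
  assumes N: "is_norm N" and u: "u \<in> convA A" and x: "x \<in> std_simplex" and xZ: "x \<notin> Zset A u"
  shows "\<exists>p q. p \<in> convA A \<and> q \<in> convA A \<and> 2 * N (A *v x - u) / dist1 x (Zset A u) = N (p - q)
     \<and> (\<exists>F. F face_of convA A \<and> F \<noteq> {} \<and> F \<noteq> convA A \<and> q \<in> F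
          \<and> p \<in> convex hull {column i A | i. column i A \<notin> F})"
proof -
  obtain z where z: "z \<in> Zset A u" "dist1 x (Zset A u) = norm1 (x - z)"
      "\<forall>z'\<in>Zset A u. norm1 (x - z) \<le> norm1 (x - z')"
    using dist_min[OF u] by blast
  have dpos: "dist1 x (Zset A u) > 0" using dist_pos[OF u xZ] .
  have zs: "z \<in> std_simplex" "A *v z = u" using z(1) by (auto simp: Zset_def)
  define dp where "dp = ((\<chi> j. max ((x - z)$j) 0) :: real^'n)"
  define dn where "dn = ((\<chi> j. max (- (x - z)$j) 0) :: real^'n)"
  have ddec: "x - z = dp - dn" by (auto simp: vec_eq_iff dp_def dn_def)
  have dpnn: "\<forall>j. 0 \<le> dp$j" "\<forall>j. 0 \<le> dn$j" by (auto simp: dp_def dn_def)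
  have sumd: "(\<Sum>j\<in>UNIV. (x - z)$j) = 0"
    using x zs(1) by (simp add: sum_subtractf std_simplex_def)
  have s1: "(\<Sum>j\<in>UNIV. dp$j) = (\<Sum>j\<in>UNIV. dn$j)"
  proof -
    have "(\<Sum>j\<in>UNIV. (x - z)$j) = (\<Sum>j\<in>UNIV. dp$j) - (\<Sum>j\<in>UNIV. dn$j)"
      by (simp add: ddec sum_subtractf)
    then show ?thesis using sumd by simp
  qed
  have s2: "norm1 (x - z) = (\<Sum>j\<in>UNIV. dp$j) + (\<Sum>j\<in>UNIV. dn$j)"
  proof -
    have "norm1 (x - z) = (\<Sum>j\<in>UNIV. dp$j + dn$j)"
      unfolding norm1_def by (rule sum.cong) (auto simp: dp_def dn_def)
    then show ?thesis by (simp add: sum.distrib)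
  qed
  define l where "l = (\<Sum>j\<in>UNIV. dp$j)"
  have l2: "norm1 (x - z) = 2 * l" "(\<Sum>j\<in>UNIV. dn$j) = l" using s1 s2 by (auto simp: l_def)
  have lpos: "l > 0" using dpos z(2) l2 by simp
  define y where "y = (1/l) *\<^sub>R dp"
  define y' where "y' = (1/l) *\<^sub>R dn"
  have ys: "y \<in> std_simplex" "y' \<in> std_simplex"
    using dpnn lpos l2 unfolding y_def y'_def std_simplex_def
    by (auto simp: sum_divide_distrib[symmetric] l_def)
  define p where "p = A *v y"
  define q where "q = A *v y'"
  have pq: "p \<in> convA A" "q \<in> convA A" using ys by (auto simp: p_def q_def convA_def)
  have Adn: "A *v dn = l *\<^sub>R q"
    using lpos by (simp add: q_def y'_def matrix_vector_mult_scaleR)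
  have Adp: "A *v dp = l *\<^sub>R p"
    using lpos by (simp add: p_def y_def matrix_vector_mult_scaleR)
  have Axu: "A *v x - u = l *\<^sub>R (p - q)"
  proof -
    have "A *v x - u = A *v (x - z)" by (simp add: zs(2) matrix_vector_mult_diff_distrib)
    also have "\<dots> = l *\<^sub>R (p - q)"
      by (simp add: ddec matrix_vector_mult_diff_distrib Adp Adn scaleR_diff_right)
    finally show ?thesis .
  qed
  have ratio: "2 * N (A *v x - u) / dist1 x (Zset A u) = N (p - q)"
    using lpos unfolding Axu z(2) l2(1) norm_props(4)[OF N] by simp
  obtain F where F: "F face_of convA A" "q \<in> rel_interior F" using min_face[OF pq(2)] by blast
  have claim: "column i A \<notin> F" if "(x - z)$i > 0" for i
    by (rule key_claim[OF z(1) z(3) x dp_def dn_def l_def[symmetric] l2(2) lpos l2(1) Adn F that])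
  have qF: "q \<in> F" using F(2) rel_interior_subset by blast
  obtain i0 where i0: "(x - z)$i0 > 0"
  proof (rule ccontr)
    assume "\<not> thesis"
    then have "\<forall>j. (x - z)$j \<le> 0" using that by (meson not_le)
    then have "\<forall>j. dp$j = 0" by (simp add: dp_def)
    then have "l = 0" by (simp add: l_def)
    then show False using lpos by simp
  qed
  have Fne: "F \<noteq> convA A" using claim[OF i0] col_in_convA[of i0 A] by blast
  define K where "K = {j. (x - z)$j > 0}"
  have yK: "\<forall>j. j \<notin> K \<longrightarrow> y$j = 0" by (auto simp: K_def y_def dp_def)
  have "p = (\<Sum>j\<in>K. y$j *\<^sub>R column j A)"
    unfolding p_def mult_sumR by (rule sum.mono_neutral_right) (use yK in auto)
  also have "\<dots> \<in> convex hull {column i A | i. column i A \<notin> F}"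
  proof (rule convex_sum)
    have "(\<Sum>j\<in>UNIV. y$j) = (\<Sum>j\<in>K. y$j)" by (rule sum.mono_neutral_right) (use yK in auto)
    then show "(\<Sum>j\<in>K. y$j) = 1" using ys(1) by (simp add: std_simplex_def)
    show "\<And>j. j \<in> K \<Longrightarrow> 0 \<le> y$j" using ys(1) by (simp add: std_simplex_def)
    show "\<And>j. j \<in> K \<Longrightarrow> column j A \<in> convex hull {column i A | i. column i A \<notin> F}"
      using claim by (intro hull_inc) (auto simp: K_def)
  qed simp_all
  finally have pG: "p \<in> convex hull {column i A | i. column i A \<notin> F}" .
  show ?thesis using pq ratio F(1) qF Fne pG by blast
qed



lemma proper_face_col:
  fixes A :: "real^'n^'m"
  assumes "F face_of convA A" "F \<noteq> convA A"
  shows "\<exists>i. column i A \<notin> F"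
proof (rule ccontr)
  assume "\<not> ?thesis"
  then have "range (\<lambda>i. column i A) \<subseteq> F" by auto
  then have "convex hull range (\<lambda>i. column i A) \<subseteq> F"
    using assms(1) face_of_imp_convex hull_minimal by blast
  then show False using assms face_of_imp_subset convA_hull by blast
qed

lemma setdist_nonneg:
  fixes A :: "real^'n^'m"
  assumes N: "is_norm N" and F: "F face_of convA A" "F \<noteq> {}" "F \<noteq> convA A"
  shows "0 \<le> setdistN N F (convex hull {column i A | i. column i A \<notin> F})"
proof -
  obtain i where i: "column i A \<notin> F" using proper_face_col[OF F(1) F(3)] by blast
  have "column i A \<in> convex hull {column i A | i. column i A \<notin> F}" using i by (intro hull_inc) auto
  then show ?thesis using F(2) unfolding setdistN_def
    by (intro cInf_greatest) (auto simp: norm_props(3)[OF N])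
qed

lemma facial_le:
  fixes A :: "real^'n^'m"
  assumes N: "is_norm N" and F: "F face_of convA A" "F \<noteq> {}" "F \<noteq> convA A"
    and q: "q \<in> F" and p: "p \<in> convex hull {column i A | i. column i A \<notin> F}"
  shows "facial_distance N A \<le> N (p - q)"
proof -
  have "facial_distance N A \<le> setdistN N F (convex hull {column i A | i. column i A \<notin> F})"
    unfolding facial_distance_def
    by (rule cInf_lower) (use F setdist_nonneg[OF N] in \<open>auto intro!: bdd_belowI[of _ 0]\<close>)
  also have "\<dots> \<le> N (q - p)"
    unfolding setdistN_def
    by (rule cInf_lower) (use q p norm_props(3)[OF N] in \<open>auto intro!: bdd_belowI[of _ 0]\<close>)
  finally show ?thesis by (simp add: norm_props(2)[OF N])
qed

theorem proposition1:
  fixes N :: "real^'m \<Rightarrow> real" and A :: "real^'n^'m"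
  assumes "is_norm N"
    and "\<exists>i j. column i A \<noteq> column j A"
  shows "diamA N A \<in> ratios N A \<and> (\<forall>r\<in>ratios N A. r \<le> diamA N A)
     \<and> facial_distance N A \<in> ratios N A \<and> (\<forall>r\<in>ratios N A. facial_distance N A \<le> r)"
proof -
  note N = assms(1)
  have upper: "\<forall>r\<in>ratios N A. r \<le> diamA N A"
  proof
    fix r assume "r \<in> ratios N A"
    then obtain u x where ux: "r = 2 * N (A *v x - u) / dist1 x (Zset A u)" "u \<in> convA A"
      "x \<in> std_simplex" "x \<notin> Zset A u" unfolding ratios_def by blast
    from key[OF N ux(2) ux(3) ux(4)] obtain p q where "p \<in> convA A" "q \<in> convA A"
      "2 * N (A *v x - u) / dist1 x (Zset A u) = N (p - q)" by blast
    then show "r \<le> diamA N A" using conv_diam[OF N] ux(1) by simp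
  qed
  have lower: "\<forall>r\<in>ratios N A. facial_distance N A \<le> r"
  proof
    fix r assume "r \<in> ratios N A"
    then obtain u x where ux: "r = 2 * N (A *v x - u) / dist1 x (Zset A u)" "u \<in> convA A"
      "x \<in> std_simplex" "x \<notin> Zset A u" unfolding ratios_def by blast
    from key[OF N ux(2) ux(3) ux(4)] obtain p q F where "2 * N (A *v x - u) / dist1 x (Zset A u) = N (p - q)"
      "F face_of convA A" "F \<noteq> {}" "F \<noteq> convA A" "q \<in> F"
      "p \<in> convex hull {column i A | i. column i A \<notin> F}"
      by blast
    then show "facial_distance N A \<le> r" using facial_le[OF N] ux(1) by simp
  qed
  obtain i j where ij: "diamA N A = N (column i A - column j A)" using diam_props(2)[OF N] by blast
  obtain i0 j0 where ij0: "column i0 A \<noteq> column j0 A" using assms(2) by blast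
  have "0 < N (column i0 A - column j0 A)" using ij0 N unfolding is_norm_def
    by (metis eq_iff_diff_eq_0 order_le_less)
  also have "\<dots> \<le> diamA N A" using diam_props(1)[OF N] by blast
  finally have Dpos: "0 < diamA N A" .
  have cij: "column i A \<noteq> column j A" using Dpos ij N unfolding is_norm_def by (metis diff_self less_irrefl)
  then have "i \<noteq> j" by auto
  have uj: "column j A \<in> convA A" by (rule col_in_convA)
  have xi: "axis i 1 \<in> std_simplex" by (rule axis_simplex)
  have xZ: "axis i 1 \<notin> Zset A (column j A)" using cij by (simp add: Zset_def A_axis)
  have dpos: "dist1 (axis i 1) (Zset A (column j A)) > 0" by (rule dist_pos[OF uj xZ])
  have "dist1 (axis i 1) (Zset A (column j A)) \<le> norm1 (axis i 1 - axis j 1)"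
    unfolding dist1_def
    by (rule cInf_lower) (auto simp: Zset_def A_axis axis_simplex norm1_def intro!: bdd_belowI[of _ 0] sum_nonneg)
  also have "\<dots> \<le> 2" using norm1_diff[of "axis i 1" "axis j 1"] norm1_simplex[OF axis_simplex[of i]] norm1_simplex[OF axis_simplex[of j]] by linarith
  finally have d2: "dist1 (axis i 1) (Zset A (column j A)) \<le> 2" .
  define r where "r = 2 * N (A *v axis i 1 - column j A) / dist1 (axis i 1) (Zset A (column j A))"
  have rR: "r \<in> ratios N A" unfolding ratios_def r_def using uj xi xZ by blast
  have "diamA N A \<le> r"
  proof -
    have "diamA N A = 2 * diamA N A / 2" by simp
    also have "\<dots> \<le> 2 * diamA N A / dist1 (axis i 1) (Zset A (column j A))"
      using Dpos dpos d2 by (intro divide_left_mono) auto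
    also have "\<dots> = r" by (simp add: r_def A_axis ij)
    finally show ?thesis .
  qed
  with upper rR have diamR: "diamA N A \<in> ratios N A" by (metis order_antisym)
  define PF where "PF = {F. F face_of convA A \<and> F \<noteq> {} \<and> F \<noteq> convA A}"
  define G where "G F = convex hull {column i A | i. column i A \<notin> F}" for F
  define S where "S = (\<lambda>F. setdistN N F (G F)) ` PF"
  have "{setdistN N F (convex hull {column i A | i. column i A \<notin> F}) | F.
      F face_of convA A \<and> F \<noteq> {} \<and> F \<noteq> convA A} = S"
    unfolding S_def PF_def G_def by auto
  then have fd: "facial_distance N A = Inf S" unfolding facial_distance_def by simp
  have finPF: "finite PF"
    by (rule finite_subset[OF _ finite_polytope_faces[OF convA_props(3)]]) (auto simp: PF_def)
  have PFne: "PF \<noteq> {}"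
  proof -
    obtain u x where ux: "u \<in> convA A" "x \<in> std_simplex" "x \<notin> Zset A u"
      using diamR unfolding ratios_def by blast
    from key[OF N ux] obtain F where "F face_of convA A" "F \<noteq> {}" "F \<noteq> convA A" by blast
    then show ?thesis by (auto simp: PF_def)
  qed
  have "Inf S \<in> S" using finPF PFne unfolding S_def by (simp add: cInf_eq_Min)
  then obtain F where F: "F \<in> PF" "facial_distance N A = setdistN N F (G F)"
    using fd unfolding S_def by auto
  have Ff: "F face_of convA A" "F \<noteq> {}" "F \<noteq> convA A" using F(1) by (auto simp: PF_def)
  have cF: "compact F" using face_of_imp_compact[OF convA_props(1) convA_props(2) Ff(1)] .
  have finC: "finite {column i A | i. column i A \<notin> F}"
    by (rule finite_subset[of _ "range (\<lambda>i. column i A)"]) auto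
  have cG: "compact (G F)" unfolding G_def by (rule compact_convex_hull[OF finite_imp_compact[OF finC]])
  obtain i1 where i1: "column i1 A \<notin> F" using proper_face_col[OF Ff(1) Ff(3)] by blast
  have "column i1 A \<in> G F" unfolding G_def using i1 by (intro hull_inc) auto
  then have Gne: "G F \<noteq> {}" by blast
  have cont: "continuous_on (F \<times> G F) (\<lambda>w. N (fst w - snd w))"
    by (rule continuous_on_compose2[OF norm_cont[OF N]]) (auto intro!: continuous_on_diff continuous_on_fst continuous_on_snd continuous_on_id)
  obtain w where w: "w \<in> F \<times> G F" "\<forall>w'\<in>F \<times> G F. N (fst w - snd w) \<le> N (fst w' - snd w')"
    using continuous_attains_inf[OF compact_Times[OF cF cG] _ cont] Ff(2) Gne by blast
  define q where "q = fst w"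
  define p where "p = snd w"
  have qp: "q \<in> F" "p \<in> G F" using w(1) by (auto simp: q_def p_def)
  have sd: "setdistN N F (G F) = N (q - p)"
    unfolding setdistN_def
    by (rule cInf_eq_minimum) (use qp w(2) in \<open>auto simp: q_def p_def\<close>)
  define K where "K = {i. column i A \<notin> F}"
  have "{column i A | i. column i A \<notin> F} = (\<lambda>i. column i A) ` K" by (auto simp: K_def)
  then have "p \<in> {A *v x | x. x \<in> std_simplex \<and> (\<forall>i. i \<notin> K \<longrightarrow> x$i = 0)}"
    using qp(2) hull_sub[of A K] unfolding G_def by auto
  then obtain x where x: "x \<in> std_simplex" "\<forall>i. i \<notin> K \<longrightarrow> x$i = 0" "p = A *v x" by blast
  have qc: "q \<in> convA A" using qp(1) Ff(1) face_of_imp_subset by blast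
  have zsup: "column i A \<in> F" if "z \<in> Zset A q" "z$i > 0" for z i
    using face_support[OF Ff(1), of z i] that qp(1) by (auto simp: Zset_def)
  have xZ: "x \<notin> Zset A q"
  proof
    assume xz: "x \<in> Zset A q"
    obtain k where k: "x$k > 0"
    proof (rule ccontr)
      assume "\<not> thesis"
      then have "\<forall>k. x$k \<le> 0" using that by (meson not_le)
      moreover have "\<forall>k. 0 \<le> x$k" using x(1) by (simp add: std_simplex_def)
      ultimately have "\<forall>k. x$k = 0" by (meson order_antisym)
      then show False using x(1) by (simp add: std_simplex_def)
    qed
    have "column k A \<in> F" using zsup[OF xz k] .
    then have "k \<notin> K" by (simp add: K_def)
    then show False using x(2) k by simp
  qed
  have Zne: "Zset A q \<noteq> {}" using qc by (auto simp: convA_def Zset_def)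
  have n2: "norm1 (x - z) = 2" if z: "z \<in> Zset A q" for z
  proof -
    have zs: "z \<in> std_simplex" using z by (simp add: Zset_def)
    have "norm1 (x - z) = (\<Sum>k\<in>UNIV. x$k + z$k)"
      unfolding norm1_def
    proof (rule sum.cong)
      fix k :: 'n
      have nn: "0 \<le> x$k" "0 \<le> z$k" using x(1) zs by (auto simp: std_simplex_def)
      have "x$k = 0 \<or> z$k = 0"
        using zsup[OF z, of k] x(2) nn by (auto simp: K_def)
      then show "\<bar>(x - z)$k\<bar> = x$k + z$k" using nn by auto
    qed simp
    also have "\<dots> = 2" using x(1) zs by (simp add: sum.distrib std_simplex_def)
    finally show ?thesis .
  qed
  have dist2: "dist1 x (Zset A q) = 2"
  proof -
    obtain z0 where z0: "z0 \<in> Zset A q" using Zne by blast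
    have "{norm1 (x - z) | z. z \<in> Zset A q} = {2}"
    proof
      show "{norm1 (x - z) | z. z \<in> Zset A q} \<subseteq> {2}" using n2 by blast
      show "{2} \<subseteq> {norm1 (x - z) | z. z \<in> Zset A q}" using n2[OF z0] z0 by force
    qed
    then show ?thesis unfolding dist1_def by simp
  qed
  have "2 * N (A *v x - q) / dist1 x (Zset A q) = facial_distance N A"
    using F(2) sd dist2 x(3) norm_props(2)[OF N, of p q] by simp
  moreover have "2 * N (A *v x - q) / dist1 x (Zset A q) \<in> ratios N A"
    unfolding ratios_def using qc x(1) xZ by blast
  ultimately have "facial_distance N A \<in> ratios N A" by simp
  with diamR upper lower show ?thesis by blast
qed

end
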